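(* Let $\mathcal{L}:\mathbb{R}^d\to\mathbb{R}$ be differentiable with $\nabla\mathcal{L}$ Lipschitz continuous with constant $L$. Run full-batch MoFO with $\beta_1<\sqrt{\beta_2}<1$, $\epsilon=0$ and learning rates $\eta_t=\eta/\sqrt{t}$ ($\eta>0$). Then for all iterations $t\ge s\ge1$ and every coordinate $i$, $$|g_{i,t}-g_{i,s}|\le\|g_t-g_s\|_2\le\frac{2\sqrt2\,LC\eta\,(t-s)}{\sqrt t},$$ where $C=\dfrac{\sqrt{d\cdot(\alpha\%)+B}}{\sqrt{1-\beta_2}\,(1-\beta_1/\sqrt{\beta_2})}$.
   Context: The coordinates of $\mathbb{R}^d$ are partitioned into $B$ blocks of sizes $d_1,\dots,d_B$ with $\sum_kd_k=d$. Fix $\alpha\%\in(0,1]$. For $z\in\mathbb{R}^d$, $\texttt{FLT}_\alpha(z)\in\{0,1\}^d$ equals, in each block $k$, $1$ exactly on a set of $\lceil d_k\cdot\alpha\%\rceil$ indices with the largest absolute values of $z$ within that block (ties broken in favour of smaller indices), and $0$ elsewhere. Full-batch MoFO with $\beta_1,\beta_2\in(0,1)$, learning rates $\eta_t>0$, initial point $\theta_0$: $m_0=v_0=0$; for $t\ge1$, $g_t=\nabla\mathcal{L}(\theta_{t-1})$, $m_t=\beta_1m_{t-1}+(1-\beta_1)g_t$, $v_t=\beta_2v_{t-1}+(1-\beta_2)g_t\odot g_t$, $\hat m_t=m_t/(1-\beta_1^t)$, $\hat v_t=v_t/(1-\beta_2^t)$, $\theta_t=\theta_{t-1}-\eta_t(\hat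 m_t\odot\texttt{FLT}_\alpha(m_t))/\sqrt{\hat v_t}$ entrywise ($\epsilon=0$: no additive constant in the denominator; a quotient with $\hat v_{i,t}=0$ is taken as $0$). $g_{i,t}$ denotes the $i$-th coordinate of $g_t$. *)

theory Defs
  imports "HOL-Analysis.Analysis"
begin

text \<open>Coordinates are indexed by a finite linearly ordered type ('n::{finite,linorder}), so vectors
  in R^d are real^('n::{finite,linorder}) with d = CARD(('n::{finite,linorder})).\<close>

definition block_of :: "(('n::{finite,linorder}) \<Rightarrow> nat) \<Rightarrow> nat \<Rightarrow> ('n::{finite,linorder}) set" where
  "block_of blk k = {j. blk j = k}"

definition beats :: "real^('n::{finite,linorder}) \<Rightarrow> ('n::{finite,linorder}) \<Rightarrow> ('n::{finite,linorder}) \<Rightarrow> bool" where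
  "beats z j i \<longleftrightarrow> \<bar>z$j\<bar> > \<bar>z$i\<bar> \<or> (\<bar>z$j\<bar> = \<bar>z$i\<bar> \<and> j < i)"

text \<open>FLT: within each block k, coordinate i is selected iff fewer than
  ceil(d_k * alpha) coordinates of its block beat it, i.e. i is among the
  ceil(d_k * alpha) top entries (largest absolute value, ties to smaller index).\<close>
definition FLT :: "(('n::{finite,linorder}) \<Rightarrow> nat) \<Rightarrow> real \<Rightarrow> real^('n::{finite,linorder}) \<Rightarrow> real^('n::{finite,linorder})" where
  "FLT blk alpha z = (\<chi> i.
     if card {j \<in> block_of blk (blk i). beats z j i}
          < nat \<lceil>real (card (block_of blk (blk i))) * alpha\<rceil>
     then 1 else 0)"

text \<open>Full-batch MoFO state (theta_t, m_t, v_t); G is the gradient of the loss,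
  lr t = eta_t. Quotients with zero denominator are 0 (epsilon = 0).\<close>
fun mofo :: "(real^('n::{finite,linorder}) \<Rightarrow> real^('n::{finite,linorder})) \<Rightarrow> (('n::{finite,linorder}) \<Rightarrow> nat) \<Rightarrow> real \<Rightarrow> real \<Rightarrow> real
              \<Rightarrow> (nat \<Rightarrow> real) \<Rightarrow> real^('n::{finite,linorder}) \<Rightarrow> nat \<Rightarrow> (real^('n::{finite,linorder})) \<times> (real^('n::{finite,linorder})) \<times> (real^('n::{finite,linorder}))" where
  "mofo G blk alpha b1 b2 lr th0 0 = (th0, 0, 0)"
| "mofo G blk alpha b1 b2 lr th0 (Suc t) =
     (let (th, m, v) = mofo G blk alpha b1 b2 lr th0 t;
          g = G th;
          m' = b1 *\<^sub>R m + (1 - b1) *\<^sub>R g;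
          v' = b2 *\<^sub>R v + (1 - b2) *\<^sub>R (\<chi> i. (g$i)^2);
          mh = (1 / (1 - b1 ^ Suc t)) *\<^sub>R m';
          vh = (1 / (1 - b2 ^ Suc t)) *\<^sub>R v';
          msk = FLT blk alpha m';
          th' = th - (\<chi> i. if vh$i = 0 then 0
                           else lr (Suc t) * (mh$i * msk$i) / sqrt (vh$i))
      in (th', m', v'))"

definition mofo_grad :: "(real^('n::{finite,linorder}) \<Rightarrow> real^('n::{finite,linorder})) \<Rightarrow> (('n::{finite,linorder}) \<Rightarrow> nat) \<Rightarrow> real \<Rightarrow> real \<Rightarrow> real
              \<Rightarrow> (nat \<Rightarrow> real) \<Rightarrow> real^('n::{finite,linorder}) \<Rightarrow> nat \<Rightarrow> real^('n::{finite,linorder})" where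
  "mofo_grad G blk alpha b1 b2 lr th0 t = G (fst (mofo G blk alpha b1 b2 lr th0 (t - 1)))"

end

theory Submission
  imports Defs
begin


lemma beats_trans: "beats z a b \<Longrightarrow> beats z b c \<Longrightarrow> beats z a c"
  unfolding beats_def by auto

lemma beats_irrefl: "\<not> beats z a a"
  unfolding beats_def by auto

lemma beats_total: "a \<noteq> b \<Longrightarrow> beats z a b \<or> beats z b a"
  unfolding beats_def by (auto simp: not_less_iff_gr_or_eq)

lemma rank_less:
  fixes A :: "('n::{finite,linorder}) set"
  assumes "beats z j i" "j \<in> A"
  shows "card {k \<in> A. beats z k j} < card {k \<in> A. beats z k i}"
proof (rule psubset_card_mono)
  show "finite {k \<in> A. beats z k i}" by simp
  show "{k \<in> A. beats z k j} \<subset> {k \<in> A. beats z k i}"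
    using assms beats_trans[of z _ j i] beats_irrefl[of z j] by blast
qed

lemma card_sel:
  fixes A :: "('n::{finite,linorder}) set"
  shows "card {i \<in> A. card {j \<in> A. beats z j i} < K} \<le> K"
proof -
  let ?r = "\<lambda>i. card {j \<in> A. beats z j i}"
  have "inj_on ?r {i \<in> A. ?r i < K}"
  proof (rule inj_onI)
    fix a b assume a: "a \<in> {i \<in> A. ?r i < K}" and b: "b \<in> {i \<in> A. ?r i < K}" and e: "?r a = ?r b"
    show "a = b"
    proof (rule ccontr)
      assume "a \<noteq> b"
      then consider "beats z a b" | "beats z b a" using beats_total by blast
      then show False
      proof cases
        case 1 then show False using rank_less[of z a b A] a e by auto
      next
        case 2 then show False using rank_less[of z b a A] b e by auto
      qed
    qed
  qed
  moreover have "?r ` {i \<in> A. ?r i < K} \<subseteq> {..<K}" by auto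
  ultimately show ?thesis using card_inj_on_le[of ?r _ "{..<K}"] by fastforce
qed

lemma FLT_01: "FLT blk alpha z $ i = 0 \<or> FLT blk alpha z $ i = 1"
  unfolding FLT_def by auto

lemma FLT_sum:
  fixes blk :: "('n::{finite,linorder}) \<Rightarrow> nat"
  assumes blocks: "\<And>j. blk j < B" and alpha: "0 < alpha"
  shows "(\<Sum>i\<in>UNIV. FLT blk alpha z $ i) \<le> real CARD('n) * alpha + real B"
proof -
  let ?f = "\<lambda>i. FLT blk alpha z $ i"
  have g: "(\<Sum>i\<in>UNIV. ?f i) = (\<Sum>k\<in>{..<B}. \<Sum>i\<in>{x. x \<in> UNIV \<and> blk x = k}. ?f i)"
    by (rule sum.group[symmetric]) (auto simp: blocks)
  have c: "real CARD('n) = (\<Sum>k\<in>{..<B}. real (card (block_of blk k)))"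
  proof -
    have "(\<Sum>i\<in>(UNIV::'n set). (1::real)) = (\<Sum>k\<in>{..<B}. \<Sum>i\<in>{x. x \<in> UNIV \<and> blk x = k}. 1)"
      by (rule sum.group[symmetric]) (auto simp: blocks)
    then show ?thesis by (simp add: block_of_def)
  qed
  have b: "(\<Sum>i\<in>{x. x \<in> UNIV \<and> blk x = k}. ?f i) \<le> real (card (block_of blk k)) * alpha + 1" for k
  proof -
    let ?A = "block_of blk k"
    let ?K = "nat \<lceil>real (card ?A) * alpha\<rceil>"
    have "(\<Sum>i\<in>{x. x \<in> UNIV \<and> blk x = k}. ?f i) = (\<Sum>i\<in>?A. if card {j \<in> ?A. beats z j i} < ?K then 1 else 0)"
      by (rule sum.cong) (auto simp: block_of_def FLT_def)
    also have "\<dots> = real (card {i \<in> ?A. card {j \<in> ?A. beats z j i} < ?K})"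
      by (simp add: sum.If_cases Int_def)
    also have "\<dots> \<le> real ?K" using card_sel[of ?A z ?K] by linarith
    also have "\<dots> \<le> real (card ?A) * alpha + 1"
      using alpha by (simp add: of_nat_nat)
    finally show ?thesis .
  qed
  have "(\<Sum>i\<in>UNIV. ?f i) \<le> (\<Sum>k\<in>{..<B}. real (card (block_of blk k)) * alpha + 1)"
    unfolding g by (rule sum_mono) (rule b)
  also have "\<dots> = real CARD('n) * alpha + real B"
    by (simp add: c sum.distrib sum_distrib_right)
  finally show ?thesis .
qed



lemma inv_step:
  fixes b1 b2 c m v g :: real
  assumes b: "0 < b1" "b1 < sqrt b2" "sqrt b2 < 1" "0 < b2"
    and c: "c = (1-b1)/(sqrt(1-b2)*(1-b1/sqrt b2))"
    and h: "\<bar>m\<bar> \<le> c * sqrt v" "0 \<le> v"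
  shows "\<bar>b1*m+(1-b1)*g\<bar> \<le> c* sqrt(b2* v+(1-b2)*g^2)"
proof -
  have b2: "b2 < 1" using b by (metis real_sqrt_lt_1_iff)
  have sb: "0 < sqrt b2" using b by simp
  have b1: "b1 < 1" using b by linarith
  define \<gamma> where "\<gamma> = b1 / sqrt b2"
  have g01: "0 < \<gamma>" "\<gamma> < 1" using b sb by (auto simp: \<gamma>_def)
  have s1: "0 < sqrt (1-b2)" using b2 by simp
  have c0: "0 \<le> c" unfolding c using b b1 g01 s1 \<gamma>_def by (intro divide_nonneg_pos mult_pos_pos) auto
  define W where "W = b2* v+(1-b2)*g^2"
  have W1: "sqrt b2 * sqrt v \<le> sqrt W"
    unfolding W_def real_sqrt_mult[symmetric] using b2 by (intro real_sqrt_le_mono) simp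
  have W2: "sqrt (1-b2) * \<bar>g\<bar> \<le> sqrt W"
  proof -
    have "sqrt (1-b2) * \<bar>g\<bar> = sqrt ((1-b2)*g^2)" by (simp add: real_sqrt_mult)
    also have "\<dots> \<le> sqrt W" unfolding W_def using b h by (intro real_sqrt_le_mono) simp
    finally show ?thesis .
  qed
  have "\<bar>b1*m+(1-b1)*g\<bar> \<le> \<bar>b1*m\<bar> + \<bar>(1-b1)*g\<bar>" by (rule abs_triangle_ineq)
  also have "\<dots> = b1*\<bar>m\<bar> + (1-b1)*\<bar>g\<bar>" using b b1 by (simp add: abs_mult)
  also have "\<dots> \<le> b1*(c* sqrt v) + (1-b1)*\<bar>g\<bar>" using h b by (simp add: mult_left_mono)
  also have "b1*(c* sqrt v) = \<gamma>*c*(sqrt b2 * sqrt v)" using sb unfolding \<gamma>_def by simp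
  also have "\<dots> \<le> \<gamma>*c* sqrt W" using W1 g01 c0 by (simp add: mult_left_mono)
  also have "(1-b1)*\<bar>g\<bar> = ((1-b1)/sqrt(1-b2))*(sqrt(1-b2)*\<bar>g\<bar>)" using s1 by simp
  also have "\<dots> \<le> ((1-b1)/sqrt(1-b2))* sqrt W"
    using W2 s1 b1 by (intro mult_left_mono) auto
  also have "\<gamma>*c* sqrt W + ((1-b1)/sqrt(1-b2))* sqrt W = c * sqrt W"
  proof -
    have "c * (1-\<gamma>) = (1-b1)/sqrt(1-b2)"
      unfolding c \<gamma>_def[symmetric] using s1 g01 by simp
    then have "\<gamma>*c + (1-b1)/sqrt(1-b2) = c" by algebra
    then show ?thesis by (metis distrib_right)
  qed
  finally show ?thesis by (simp only: W_def)
qed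

lemma upd_bound:
  fixes b1 b2 c M V lr f :: real
  assumes b: "0 < b1" "b1 < sqrt b2" "sqrt b2 < 1" "0 < b2"
    and c: "c = (1-b1)/(sqrt(1-b2)*(1-b1/sqrt b2))"
    and h: "\<bar>M\<bar> \<le> c * sqrt V" "0 \<le> V" and lr: "0 \<le> lr" and f: "f = 0 \<or> f = 1" and n: "1 \<le> n"
  shows "\<bar>if (1/(1-b2^n))* V = 0 then 0 else lr*((1/(1-b1^n))*M*f)/sqrt((1/(1-b2^n))* V)\<bar>
          \<le> lr * (1/(sqrt(1-b2)*(1-b1/sqrt b2))) * f"
proof -
  have b2: "b2 < 1" using b by (metis real_sqrt_lt_1_iff)
  have sb: "0 < sqrt b2" using b by simp
  have b1: "b1 < 1" using b by linarith
  have g01: "0 < b1/sqrt b2" "b1/sqrt b2 < 1" using b sb by auto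
  have s1: "0 < sqrt (1-b2)" using b2 by simp
  define C0 where "C0 = 1/(sqrt(1-b2)*(1-b1/sqrt b2))"
  have C0: "0 < C0" unfolding C0_def using s1 g01 by simp
  have cC: "c = (1-b1)*C0" unfolding c C0_def by simp
  have p1: "b1^n \<le> b1" using power_decreasing[of 1 n b1] b b1 n by simp
  have p1': "b1^n < 1" using p1 b1 by linarith
  have q: "0 < 1 - b2^n" "1 - b2^n \<le> 1" using b b2 n by (auto simp: power_less_one_iff)
  show ?thesis
  proof (cases "V = 0")
    case True then show ?thesis using lr C0 f by (auto simp: C0_def[symmetric])
  next
    case False
    then have V: "0 < V" using h by simp
    then have ne: "(1/(1-b2^n))* V \<noteq> 0" using q by simp
    have "\<bar>lr*((1/(1-b1^n))*M*f)/sqrt((1/(1-b2^n))* V)\<bar>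
        = lr*f*(\<bar>M\<bar>/(1-b1^n))*(sqrt(1-b2^n)/sqrt V)"
      using f lr p1' q V by (auto simp: abs_mult real_sqrt_divide real_sqrt_mult)
    also have "\<dots> \<le> lr*f*((c* sqrt V)/(1-b1^n))*(sqrt(1-b2^n)/sqrt V)"
      using f lr p1' q V h by (intro mult_right_mono mult_left_mono divide_right_mono) auto
    also have "\<dots> = lr*f*C0*(((1-b1)/(1-b1^n))* sqrt(1-b2^n))"
      unfolding cC using V by simp
    also have "\<dots> \<le> lr*f*C0*1"
    proof (rule mult_left_mono)
      have "(1-b1)/(1-b1^n) \<le> 1" using p1 p1' by simp
      moreover have "sqrt(1-b2^n) \<le> 1" using q by simp
      moreover have "0 \<le> (1-b1)/(1-b1^n)" using b1 p1' by simp
      ultimately show "((1-b1)/(1-b1^n))* sqrt(1-b2^n) \<le> 1"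
        by (metis mult_le_one real_sqrt_ge_zero q(1) less_imp_le)
      show "0 \<le> lr*f*C0" using lr f C0 by auto
    qed
    finally show ?thesis using ne unfolding C0_def[symmetric] by (simp add: mult_ac)
  qed
qed

lemma sum_sqrt_bound:
  fixes s t :: nat
  assumes "s \<le> t"
  shows "(\<Sum>k\<in>{s..<t}. 1/sqrt(real (Suc k))) \<le> 2*(sqrt (real t) - sqrt (real s))"
  using assms
proof (induction t rule: dec_induct)
  case base then show ?case by simp
next
  case (step n)
  have a: "1/sqrt(real (Suc n)) \<le> 2*(sqrt (real (Suc n)) - sqrt (real n))"
  proof -
    have "sqrt (real n) \<le> sqrt (real (Suc n))" by simp
    have "sqrt (real (Suc n)) * sqrt (real (Suc n)) = real n + 1" by simp
    moreover have "sqrt (real n) * sqrt (real (Suc n)) \<le> real n + 1/2"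
    proof -
      have "sqrt (real n) * sqrt (real (Suc n)) = sqrt (real n * (real n + 1))" by (simp add: real_sqrt_mult)
      also have "\<dots> \<le> sqrt ((real n + 1/2)^2)" by (intro real_sqrt_le_mono) (simp add: power2_eq_square field_simps)
      also have "\<dots> = real n + 1/2" by simp
      finally show ?thesis .
    qed
    ultimately have "1 \<le> 2*(sqrt (real (Suc n)) - sqrt (real n)) * sqrt (real (Suc n))"
      by (simp add: algebra_simps)
    then show ?thesis by (simp add: divide_le_eq)
  qed
  show ?case using step a by simp
qed

lemma sqrt_diff_bound:
  fixes s t :: nat
  assumes "s \<le> t"
  shows "2*(sqrt (real t) - sqrt (real s)) \<le> 2* sqrt 2*real (t-s)/sqrt(real (Suc t))"
proof (cases "s = t")
  case True then show ?thesis by simp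
next
  case False
  then have t1: "1 \<le> t" using assms by simp
  then have st: "0 < sqrt (real t)" by simp
  have "sqrt (real s) * sqrt (real t) \<ge> real s"
  proof -
    have "sqrt (real s) * sqrt (real s) \<le> sqrt (real s) * sqrt (real t)"
      using assms by (intro mult_left_mono) auto
    then show ?thesis by simp
  qed
  then have "(sqrt (real t) - sqrt (real s)) * sqrt (real t) \<le> real (t - s)"
    using assms by (simp add: algebra_simps of_nat_diff)
  then have e1: "sqrt (real t) - sqrt (real s) \<le> real (t-s)/sqrt (real t)"
    using st by (simp add: le_divide_eq)
  have "sqrt (real (Suc t)) \<le> sqrt 2 * sqrt (real t)"
    unfolding real_sqrt_mult[symmetric] using t1 by (intro real_sqrt_le_mono) simp
  then have "1/sqrt (real t) \<le> sqrt 2 / sqrt (real (Suc t))"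
    using st by (simp add: field_simps)
  then have "real (t-s)/sqrt (real t) \<le> real (t-s) * (sqrt 2 / sqrt (real (Suc t)))"
    by (metis mult_left_mono of_nat_0_le_iff times_divide_eq_right mult_1_right)
  with e1 have "sqrt (real t) - sqrt (real s) \<le> real (t-s) * (sqrt 2 / sqrt (real (Suc t)))" by (rule order_trans)
  then have "2*(sqrt (real t) - sqrt (real s)) \<le> 2*(real (t-s) * (sqrt 2 / sqrt (real (Suc t))))" by (rule mult_left_mono) simp
  then show ?thesis by (simp add: mult_ac)
qed



lemma mofo_inv:
  assumes b: "0 < b1" "b1 < sqrt b2" "sqrt b2 < 1" "0 < b2"
  shows "0 \<le> snd (snd (mofo G blk alpha b1 b2 lr th0 t)) $ i \<and>
    \<bar>fst (snd (mofo G blk alpha b1 b2 lr th0 t)) $ i\<bar>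
      \<le> (1-b1)/(sqrt(1-b2)*(1-b1/sqrt b2)) * sqrt (snd (snd (mofo G blk alpha b1 b2 lr th0 t)) $ i)"
proof (induction t)
  case 0 then show ?case by simp
next
  case (Suc t)
  obtain th m v where eq: "mofo G blk alpha b1 b2 lr th0 t = (th, m, v)" by (cases "mofo G blk alpha b1 b2 lr th0 t") auto
  have b2: "b2 < 1" using b by (metis real_sqrt_lt_1_iff)
  from Suc have h: "0 \<le> v $ i" "\<bar>m $ i\<bar> \<le> (1-b1)/(sqrt(1-b2)*(1-b1/sqrt b2)) * sqrt (v $ i)" by (simp_all add: eq)
  have "\<bar>b1 * m $ i + (1-b1) * G th $ i\<bar> \<le> (1-b1)/(sqrt(1-b2)*(1-b1/sqrt b2)) * sqrt (b2 * v $ i + (1-b2) * (G th $ i)^2)"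
    by (rule inv_step[OF b refl h(2) h(1)])
  moreover have "0 \<le> b2 * v $ i + (1-b2) * (G th $ i)^2" using h b b2 by simp
  ultimately show ?case by (simp add: eq Let_def)
qed

lemma mofo_step_coord:
  assumes b: "0 < b1" "b1 < sqrt b2" "sqrt b2 < 1" "0 < b2" and lr: "0 \<le> lr (Suc t)"
  shows "\<exists>z. \<forall>i. \<bar>(fst (mofo G blk alpha b1 b2 lr th0 (Suc t)) - fst (mofo G blk alpha b1 b2 lr th0 t)) $ i\<bar>
      \<le> lr (Suc t) * (1/(sqrt(1-b2)*(1-b1/sqrt b2))) * FLT blk alpha z $ i"
proof -
  obtain th m v where eq: "mofo G blk alpha b1 b2 lr th0 t = (th, m, v)" by (cases "mofo G blk alpha b1 b2 lr th0 t") auto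
  define m' where "m' = b1 *\<^sub>R m + (1 - b1) *\<^sub>R G th"
  define v' where "v' = b2 *\<^sub>R v + (1 - b2) *\<^sub>R (\<chi> i. (G th $ i)^2)"
  have b2: "b2 < 1" using b by (metis real_sqrt_lt_1_iff)
  have inv: "0 \<le> v' $ i \<and> \<bar>m' $ i\<bar> \<le> (1-b1)/(sqrt(1-b2)*(1-b1/sqrt b2)) * sqrt (v' $ i)" for i
    using mofo_inv[OF b, of G blk alpha lr th0 "Suc t" i] by (simp add: eq Let_def m'_def v'_def)
  have "\<bar>(fst (mofo G blk alpha b1 b2 lr th0 (Suc t)) - fst (mofo G blk alpha b1 b2 lr th0 t)) $ i\<bar>
      \<le> lr (Suc t) * (1/(sqrt(1-b2)*(1-b1/sqrt b2))) * FLT blk alpha m' $ i" for i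
  proof -
    have "\<bar>(fst (mofo G blk alpha b1 b2 lr th0 (Suc t)) - fst (mofo G blk alpha b1 b2 lr th0 t)) $ i\<bar>
      = \<bar>if (1/(1-b2^Suc t)) * v' $ i = 0 then 0 else lr (Suc t)*((1/(1-b1^Suc t)) * m' $ i * FLT blk alpha m' $ i)/sqrt((1/(1-b2^Suc t)) * v' $ i)\<bar>"
      by (simp add: eq Let_def m'_def v'_def)
    also have "\<dots> \<le> lr (Suc t) * (1/(sqrt(1-b2)*(1-b1/sqrt b2))) * FLT blk alpha m' $ i"
      using inv[of i] by (intro upd_bound[OF b refl _ _ lr FLT_01]) auto
    finally show ?thesis .
  qed
  then show ?thesis by blast
qed



lemma mofo_step_norm:
  fixes blk :: "('n::{finite,linorder}) \<Rightarrow> nat"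
  assumes b: "0 < b1" "b1 < sqrt b2" "sqrt b2 < 1" "0 < b2" and lr: "0 \<le> lr (Suc t)"
    and blocks: "\<And>j. blk j < B" and alpha: "0 < alpha"
  shows "norm (fst (mofo G blk alpha b1 b2 lr th0 (Suc t)) - fst (mofo G blk alpha b1 b2 lr th0 t))
      \<le> lr (Suc t) * (sqrt (real CARD('n) * alpha + real B) / (sqrt (1 - b2) * (1 - b1 / sqrt b2)))"
proof -
  define D where "D = fst (mofo G blk alpha b1 b2 lr th0 (Suc t)) - fst (mofo G blk alpha b1 b2 lr th0 t)"
  define C0 where "C0 = 1/(sqrt(1-b2)*(1-b1/sqrt b2))"
  have b2: "b2 < 1" using b by (metis real_sqrt_lt_1_iff)
  have sb: "0 < sqrt b2" using b by simp
  have g01: "b1/sqrt b2 < 1" using b sb by auto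
  have C0: "0 \<le> C0" unfolding C0_def using b2 g01 by simp
  obtain z where z: "\<And>i. \<bar>D $ i\<bar> \<le> lr (Suc t) * C0 * FLT blk alpha z $ i"
    using mofo_step_coord[of b1 b2 lr t G blk alpha th0, OF b lr] unfolding D_def C0_def by blast
  have sq: "(D $ i)^2 \<le> (lr (Suc t) * C0)^2 * FLT blk alpha z $ i" for i
  proof -
    have "(D $ i)^2 = \<bar>D $ i\<bar>^2" by simp
    also have "\<dots> \<le> (lr (Suc t) * C0 * FLT blk alpha z $ i)^2"
      by (rule power_mono[OF z]) simp
    also have "\<dots> = (lr (Suc t) * C0)^2 * FLT blk alpha z $ i"
      using FLT_01[of blk alpha z i] by (auto simp: power_mult_distrib)
    finally show ?thesis .
  qed
  have "norm D = sqrt (\<Sum>i\<in>UNIV. (D $ i)^2)" by (simp add: norm_vec_def L2_set_def)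
  also have "\<dots> \<le> sqrt (\<Sum>i\<in>UNIV. (lr (Suc t) * C0)^2 * FLT blk alpha z $ i)"
    by (intro real_sqrt_le_mono sum_mono sq)
  also have "\<dots> = lr (Suc t) * C0 * sqrt (\<Sum>i\<in>UNIV. FLT blk alpha z $ i)"
    using lr C0 by (simp add: sum_distrib_left[symmetric] real_sqrt_mult)
  also have "\<dots> \<le> lr (Suc t) * C0 * sqrt (real CARD('n) * alpha + real B)"
    using lr C0 FLT_sum[OF blocks alpha, where z=z] by (intro mult_left_mono real_sqrt_le_mono) auto
  finally show ?thesis unfolding D_def C0_def by simp
qed

lemma mofo_tele:
  fixes blk :: "('n::{finite,linorder}) \<Rightarrow> nat"
  assumes b: "0 < b1" "b1 < sqrt b2" "sqrt b2 < 1" "0 < b2" and lr: "\<And>k. 0 \<le> lr k"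
    and blocks: "\<And>j. blk j < B" and alpha: "0 < alpha" and st: "s \<le> t"
  shows "norm (fst (mofo G blk alpha b1 b2 lr th0 t) - fst (mofo G blk alpha b1 b2 lr th0 s))
      \<le> (\<Sum>k\<in>{s..<t}. lr (Suc k)) * (sqrt (real CARD('n) * alpha + real B) / (sqrt (1 - b2) * (1 - b1 / sqrt b2)))"
  using st
proof (induction t rule: dec_induct)
  case base then show ?case by simp
next
  case (step n)
  let ?th = "\<lambda>k. fst (mofo G blk alpha b1 b2 lr th0 k)"
  let ?C = "sqrt (real CARD('n) * alpha + real B) / (sqrt (1 - b2) * (1 - b1 / sqrt b2))"
  have "norm (?th (Suc n) - ?th s) \<le> norm (?th (Suc n) - ?th n) + norm (?th n - ?th s)"
    by (rule order_trans[OF _ norm_triangle_ineq]) simp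
  also have "\<dots> \<le> lr (Suc n) * ?C + (\<Sum>k\<in>{s..<n}. lr (Suc k)) * ?C"
    using mofo_step_norm[of b1 b2 lr n blk B alpha G th0, OF b lr blocks alpha] step.IH by linarith
  also have "\<dots> = (\<Sum>k\<in>{s..<Suc n}. lr (Suc k)) * ?C"
  proof -
    have "(\<Sum>k\<in>{s..<Suc n}. lr (Suc k)) = (\<Sum>k\<in>{s..<n}. lr (Suc k)) + lr (Suc n)" using step.hyps by simp
    then show ?thesis by (metis distrib_right add.commute)
  qed
  finally show ?case .
qed



theorem lemma3:
  fixes Lf :: "real^('n::{finite,linorder}) \<Rightarrow> real"
    and G :: "real^('n::{finite,linorder}) \<Rightarrow> real^('n::{finite,linorder})"
    and blk :: "('n::{finite,linorder}) \<Rightarrow> nat" and B :: nat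
    and alpha b1 b2 eta Lc :: real and th0 :: "real^('n::{finite,linorder})"
    and s t :: nat and i :: "'n::{finite,linorder}"
  assumes grad: "\<And>x. (Lf has_derivative (\<lambda>h. G x \<bullet> h)) (at x)"
    and lip: "\<And>x y. norm (G x - G y) \<le> Lc * norm (x - y)"
    and blocks: "\<And>j. blk j < B"
    and alpha: "0 < alpha" "alpha \<le> 1"
    and betas: "0 < b1" "b1 < sqrt b2" "sqrt b2 < 1" "0 < b2"
    and eta: "0 < eta"
    and st: "1 \<le> s" "s \<le> t"
  shows
    "let g = mofo_grad G blk alpha b1 b2 (\<lambda>k. eta / sqrt (real k)) th0;
         C = sqrt (real CARD(('n::{finite,linorder})) * alpha + real B) / (sqrt (1 - b2) * (1 - b1 / sqrt b2))
     in \<bar>g t $ i - g s $ i\<bar> \<le> norm (g t - g s)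
        \<and> norm (g t - g s) \<le> 2 * sqrt 2 * Lc * C * eta * real (t - s) / sqrt (real t)"
proof -
  define lr where "lr = (\<lambda>k::nat. eta / sqrt (real k))"
  define g where "g = mofo_grad G blk alpha b1 b2 lr th0"
  define C where "C = sqrt (real CARD(('n::{finite,linorder})) * alpha + real B) / (sqrt (1 - b2) * (1 - b1 / sqrt b2))"
  let ?th = "\<lambda>k. fst (mofo G blk alpha b1 b2 lr th0 k)"
  have lr0: "\<And>k. 0 \<le> lr k" unfolding lr_def using eta by simp
  have b2: "b2 < 1" using betas by (metis real_sqrt_lt_1_iff)
  have sb: "0 < sqrt b2" using betas by simp
  have g01: "b1/sqrt b2 < 1" using betas sb by auto
  have C0: "0 \<le> C"
  proof -
    have "0 < sqrt(1-b2) * (1 - b1/sqrt b2)" using b2 g01 by simp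
    then show ?thesis unfolding C_def by (intro divide_nonneg_pos real_sqrt_ge_zero) (use alpha in simp_all)
  qed
  have Lc0: "0 \<le> Lc"
  proof -
    have "0 \<le> norm (G (axis i 1) - G 0)" by simp
    also have "\<dots> \<le> Lc * norm (axis i (1::real) - 0)" by (rule lip)
    finally show ?thesis by simp
  qed
  obtain s' where s': "s = Suc s'" using st(1) by (cases s) auto
  obtain t' where t': "t = Suc t'" using st by (cases t) auto
  have st': "s' \<le> t'" using st s' t' by simp
  have gt: "g t = G (?th t')" "g s = G (?th s')" unfolding g_def mofo_grad_def s' t' by simp_all
  have tele: "norm (?th t' - ?th s') \<le> (\<Sum>k\<in>{s'..<t'}. lr (Suc k)) * C"
    unfolding C_def by (rule mofo_tele[OF betas lr0 blocks alpha(1) st'])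
  have sumeq: "(\<Sum>k\<in>{s'..<t'}. lr (Suc k)) = eta * (\<Sum>k\<in>{s'..<t'}. 1/sqrt (real (Suc k)))"
    unfolding lr_def by (simp add: sum_distrib_left)
  have sbnd: "(\<Sum>k\<in>{s'..<t'}. 1/sqrt (real (Suc k))) \<le> 2* sqrt 2*real (t'-s')/sqrt(real (Suc t'))"
    using sum_sqrt_bound[OF st'] sqrt_diff_bound[OF st'] by linarith
  have "norm (g t - g s) \<le> Lc * norm (?th t' - ?th s')" unfolding gt by (rule lip)
  also have "\<dots> \<le> Lc * (eta * (\<Sum>k\<in>{s'..<t'}. 1/sqrt (real (Suc k))) * C)"
    using tele Lc0 unfolding sumeq by (rule mult_left_mono)
  also have "\<dots> \<le> Lc * (eta * (2* sqrt 2*real (t'-s')/sqrt(real (Suc t'))) * C)"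
    using sbnd Lc0 eta C0 by (intro mult_left_mono mult_right_mono) auto
  also have "\<dots> = 2 * sqrt 2 * Lc * C * eta * real (t - s) / sqrt (real t)"
    unfolding s' t' by simp
  finally have n: "norm (g t - g s) \<le> 2 * sqrt 2 * Lc * C * eta * real (t - s) / sqrt (real t)" .
  have c: "\<bar>g t $ i - g s $ i\<bar> \<le> norm (g t - g s)"
    using component_le_norm_cart[of "g t - g s" i] by simp
  show ?thesis using n c unfolding Let_def g_def C_def lr_def by simp
qed

end
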